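(* Let $t \geq 4$ and $n \geq 1$ be integers, let $t' = [t/2]$, $x = \left[\frac{nt'-1}{t'-1}\right]$, and write $x-2 = tq + r$ with integers $q$ and $0 \leq r \leq t-1$. Let $R = R_{t-2,t}(K_{1,n})$. Then $R = x$ if and only if one of the following conditions holds: (a) $r = t-1$ and $x$ and $q+1$ are odd; (b) $r < t-2$ and $t \leq 2r+4$ and $t$ is even; (c) $r < t-2$ and $q+r+3 < t \leq 2q+2r+5$ and $t$ is odd.
   Context: $[a]$ denotes the integer part (floor) of a real number $a$. $K_{1,n}$ is the star with $n$ edges. For a graph $G$ and integers $1 \leq s < t$, $R_{s,t}(G)$ is the smallest positive integer $N$ such that every coloring of the edges of the complete graph $K_N$ with $t$ colors contains a (not necessarily induced) subgraph isomorphic to $G$ whose edges use at most $s$ distinct colors. *)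

theory Defs
  imports Complex_Main
begin

text \<open>A finite simple graph is given by a vertex set V and a set E of 2-element subsets of V.
  A copy of (V,E) in K_N (vertices {..<N}) is an injective map f from V into {..<N};
  its edges are the images f ` e for e in E.  An edge colouring of K_N with t colours
  is a map c from edges ({u,v} with u \<noteq> v, u,v < N) to {..<t}.\<close>

definition edge_colouring :: "nat \<Rightarrow> nat \<Rightarrow> (nat set \<Rightarrow> nat) \<Rightarrow> bool" where
  "edge_colouring N t c \<longleftrightarrow>
     (\<forall>u<N. \<forall>v<N. u \<noteq> v \<longrightarrow> c {u, v} < t)"

definition has_few_coloured_copy ::
  "'a set \<Rightarrow> 'a set set \<Rightarrow> nat \<Rightarrow> nat \<Rightarrow> (nat set \<Rightarrow> nat) \<Rightarrow> bool" where
  "has_few_coloured_copy V E s N c \<longleftrightarrow>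
     (\<exists>f. inj_on f V \<and> f ` V \<subseteq> {..<N} \<and> card ((\<lambda>e. c (f ` e)) ` E) \<le> s)"

definition ramsey_st :: "nat \<Rightarrow> nat \<Rightarrow> 'a set \<Rightarrow> 'a set set \<Rightarrow> nat" where
  "ramsey_st s t V E = (LEAST N. 0 < N \<and>
     (\<forall>c. edge_colouring N t c \<longrightarrow> has_few_coloured_copy V E s N c))"

definition star_V :: "nat \<Rightarrow> nat set" where
  "star_V n = {0..n}"

definition star_E :: "nat \<Rightarrow> nat set set" where
  "star_E n = {{0, i} | i. i \<in> {1..n}}"

end

theory Submission
  imports Defs
begin
definition deg :: "(nat set \<Rightarrow> nat) \<Rightarrow> nat \<Rightarrow> nat \<Rightarrow> nat \<Rightarrow> nat" where
  "deg c N v k = card {w. w < N \<and> w \<noteq> v \<and> c {v,w} = k}"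

definition AV :: "nat \<Rightarrow> nat \<Rightarrow> nat \<Rightarrow> bool" where
  "AV t n N \<longleftrightarrow> (\<exists>c. edge_colouring N t c \<and>
      \<not> has_few_coloured_copy (star_V n) (star_E n) (t-2) N c)"

lemma part_card:
  assumes "v < N" "k1 \<noteq> k2"
  shows "card {w. w < N \<and> w \<noteq> v \<and> c {v,w} \<noteq> k1 \<and> c {v,w} \<noteq> k2}
          + deg c N v k1 + deg c N v k2 = N - 1"
proof -
  let ?W = "{w. w < N \<and> w \<noteq> v \<and> c {v,w} \<noteq> k1 \<and> c {v,w} \<noteq> k2}"
  let ?D1 = "{w. w < N \<and> w \<noteq> v \<and> c {v,w} = k1}"
  let ?D2 = "{w. w < N \<and> w \<noteq> v \<and> c {v,w} = k2}"
  have eq: "{..<N} - {v} = ?W \<union> ?D1 \<union> ?D2" by auto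
  have "card ({..<N} - {v}) = N - 1" using assms by simp
  moreover have "card (?W \<union> ?D1 \<union> ?D2) = card ?W + card ?D1 + card ?D2"
    using assms by (subst card_Un_disjoint, auto, subst card_Un_disjoint, auto)
  ultimately show ?thesis unfolding deg_def using eq by simp
qed

lemma copy_of_few:
  assumes ec: "edge_colouring N t c" and v: "v < N" and k: "k1 < t" "k2 < t" "k1 \<noteq> k2"
    and le: "n + deg c N v k1 + deg c N v k2 \<le> N - 1"
  shows "has_few_coloured_copy (star_V n) (star_E n) (t-2) N c"
proof -
  let ?W = "{w. w < N \<and> w \<noteq> v \<and> c {v,w} \<noteq> k1 \<and> c {v,w} \<noteq> k2}"
  have "n \<le> card ?W" using part_card[OF v k(3), of c] le by simp
  then obtain W' where W': "W' \<subseteq> ?W" "card W' = n" "finite W'"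
    by (rule obtain_subset_with_card_n)
  obtain g where g: "bij_betw g {1..n} W'" using ex_bij_betw_nat_finite_1[OF W'(3)] W'(2) by auto
  define f where "f i = (if i = 0 then v else g i)" for i
  have gW: "g i \<in> ?W" if hi: "i \<in> {1..n}" for i
  proof -
    have e: "g ` {1..n} = W'" using g by (simp add: bij_betw_def)
    have "g i \<in> g ` {1..n}" using hi by (rule imageI)
    then have "g i \<in> W'" unfolding e .
    then show ?thesis using W'(1) by (rule subsetD[rotated])
  qed
  have inj: "inj_on f {0..n}"
  proof (rule inj_onI)
    fix i j assume ij: "i \<in> {0..n}" "j \<in> {0..n}" "f i = f j"
    show "i = j"
    proof (cases "i = 0"; cases "j = 0")
      assume "i \<noteq> 0" "j \<noteq> 0"
      hence "g i = g j" using ij(3) unfolding f_def by simp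
      moreover have "i \<in> {1..n}" "j \<in> {1..n}" using ij \<open>i \<noteq> 0\<close> \<open>j \<noteq> 0\<close> by auto
      ultimately show ?thesis using bij_betw_imp_inj_on[OF g] by (meson inj_onD)
    next
      assume a: "i = 0" "j \<noteq> 0"
      hence "j \<in> {1..n}" using ij by auto
      hence "g j \<in> ?W" by (rule gW)
      hence "g j \<noteq> v" by simp
      thus ?thesis using ij(3) a unfolding f_def by simp
    next
      assume a: "i \<noteq> 0" "j = 0"
      hence "i \<in> {1..n}" using ij by auto
      hence "g i \<in> ?W" by (rule gW)
      hence "g i \<noteq> v" by simp
      thus ?thesis using ij(3) a unfolding f_def by simp
    qed simp
  qed
  have img: "f ` {0..n} \<subseteq> {..<N}"
  proof
    fix y assume "y \<in> f ` {0..n}"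
    then obtain i where i: "i \<in> {0..n}" "y = f i" by blast
    show "y \<in> {..<N}"
    proof (cases "i = 0")
      case True thus ?thesis using i v unfolding f_def by simp
    next
      case False hence "i \<in> {1..n}" using i by auto
      hence "g i \<in> ?W" by (rule gW)
      hence "g i < N" by simp
      thus ?thesis using i False unfolding f_def by simp
    qed
  qed
  have sub: "(\<lambda>e. c (f ` e)) ` star_E n \<subseteq> {..<t} - {k1, k2}"
  proof
    fix y assume "y \<in> (\<lambda>e. c (f ` e)) ` star_E n"
    then obtain i where i: "i \<in> {1..n}" "y = c (f ` {0, i})" unfolding star_E_def by auto
    have fe: "f ` {0,i} = {v, g i}" using i unfolding f_def by auto
    have gi: "g i < N" "g i \<noteq> v" "c {v, g i} \<noteq> k1" "c {v,g i} \<noteq> k2" using gW[OF i(1)] by auto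
    have "c {v, g i} < t" using ec v gi(1,2) unfolding edge_colouring_def by auto
    then show "y \<in> {..<t} - {k1, k2}" using i(2) fe gi by auto
  qed
  have "card ((\<lambda>e. c (f ` e)) ` star_E n) \<le> card ({..<t} - {k1, k2})"
    by (rule card_mono[OF _ sub]) simp
  also have "\<dots> = t - 2" using k by simp
  finally show ?thesis unfolding has_few_coloured_copy_def star_V_def using inj img by blast
qed

lemma no_copy:
  assumes ec: "edge_colouring N t c" and t2: "2 \<le> t"
    and av: "\<And>v k1 k2. v < N \<Longrightarrow> k1 < t \<Longrightarrow> k2 < t \<Longrightarrow> k1 \<noteq> k2 \<Longrightarrow>
              N \<le> deg c N v k1 + deg c N v k2 + n"
  shows "\<not> has_few_coloured_copy (star_V n) (star_E n) (t-2) N c"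
proof
  assume "has_few_coloured_copy (star_V n) (star_E n) (t-2) N c"
  then obtain f where f: "inj_on f {0..n}" "f ` {0..n} \<subseteq> {..<N}"
    "card ((\<lambda>e. c (f ` e)) ` star_E n) \<le> t - 2"
    unfolding has_few_coloured_copy_def star_V_def by auto
  let ?C = "(\<lambda>e. c (f ` e)) ` star_E n"
  define v where "v = f 0"
  have v: "v < N" using f(2) unfolding v_def by (auto simp: image_subset_iff)
  have fi: "f i < N \<and> f i \<noteq> v \<and> c {v, f i} \<in> ?C" if hi: "i \<in> {1..n}" for i
  proof -
    have i0: "i \<in> {0..n}" "0 \<in> {0..n}" "i \<noteq> 0" using hi by auto
    have "f i \<noteq> f 0"
    proof
      assume "f i = f 0"
      from inj_onD[OF f(1) this i0(1) i0(2)] i0(3) show False by simp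
    qed
    hence ne: "f i \<noteq> v" unfolding v_def .
    have fe: "f ` {0,i} = {v, f i}" unfolding v_def by auto
    have "{0,i} \<in> star_E n" using hi unfolding star_E_def by auto
    hence "c (f ` {0,i}) \<in> ?C" by (rule imageI)
    hence "c {v, f i} \<in> ?C" using fe by simp
    moreover have "f i < N" using f(2) i0(1) by (auto simp: image_subset_iff)
    ultimately show ?thesis using ne by simp
  qed
  have Csub: "?C \<subseteq> {..<t}"
  proof
    fix y assume "y \<in> ?C"
    then obtain i where i: "i \<in> {1..n}" "y = c (f ` {0, i})" unfolding star_E_def by auto
    have fe: "f ` {0,i} = {v, f i}" unfolding v_def by auto
    have "c {v, f i} < t" using fi[OF i(1)] v ec unfolding edge_colouring_def by auto
    then show "y \<in> {..<t}" using i(2) fe by simp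
  qed
  have fin: "finite ?C" using finite_subset[OF Csub] by simp
  have "card ({..<t} - ?C) = t - card ?C" using Csub fin by (simp add: card_Diff_subset)
  moreover have "card ?C \<le> t - 2" using f(3) .
  moreover have "card ?C \<le> t" using card_mono[OF _ Csub] by simp
  ultimately have c2: "card ({..<t} - ?C) \<ge> 2" using t2 by linarith
  hence "{..<t} - ?C \<noteq> {}" by (metis card.empty not_numeral_le_zero)
  then obtain k1 where k1: "k1 \<in> {..<t} - ?C" by blast
  have "card ({..<t} - ?C - {k1}) \<ge> 1" using c2 k1 by simp
  hence "{..<t} - ?C - {k1} \<noteq> {}" by (metis card.empty not_one_le_zero)
  then obtain k2 where k2: "k2 \<in> {..<t} - ?C - {k1}" by blast
  let ?W = "{w. w < N \<and> w \<noteq> v \<and> c {v,w} \<noteq> k1 \<and> c {v,w} \<noteq> k2}"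
  have "f ` {1..n} \<subseteq> ?W"
  proof
    fix w assume "w \<in> f ` {1..n}"
    then obtain i where i: "i \<in> {1..n}" "w = f i" by blast
    show "w \<in> ?W" using fi[OF i(1)] i(2) k1 k2 by auto
  qed
  hence "card (f ` {1..n}) \<le> card ?W" by (intro card_mono) auto
  moreover have "inj_on f {1..n}" by (rule inj_on_subset[OF f(1)]) auto
  hence "card (f ` {1..n}) = n" by (simp add: card_image)
  moreover have "card ?W + deg c N v k1 + deg c N v k2 = N - 1"
    using part_card[OF v] k2 by auto
  moreover have "N \<le> deg c N v k1 + deg c N v k2 + n" using av[OF v] k1 k2 by auto
  ultimately show False using v by linarith
qed

lemma avoid_of_nocopy:
  assumes ec: "edge_colouring N t c"
    and nc: "\<not> has_few_coloured_copy (star_V n) (star_E n) (t-2) N c"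
    and "v < N" "k1 < t" "k2 < t" "k1 \<noteq> k2"
  shows "N \<le> deg c N v k1 + deg c N v k2 + n"
  using copy_of_few[OF ec assms(3-6), of n] nc by linarith

lemma deg_sum:
  assumes ec: "edge_colouring N t c" and v: "v < N"
  shows "(\<Sum>k<t. deg c N v k) = N - 1"
proof -
  have e: "{..<N} - {v} = (\<Union>k\<in>{..<t}. {w. w < N \<and> w \<noteq> v \<and> c {v,w} = k})"
    using ec v unfolding edge_colouring_def by auto
  have "card (\<Union>k\<in>{..<t}. {w. w < N \<and> w \<noteq> v \<and> c {v,w} = k}) = (\<Sum>k<t. card {w. w < N \<and> w \<noteq> v \<and> c {v,w} = k})"
    by (rule card_UN_disjoint) auto
  hence "card ({..<N} - {v}) = (\<Sum>k<t. card {w. w < N \<and> w \<noteq> v \<and> c {v,w} = k})"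
    by (subst e)
  thus ?thesis using v unfolding deg_def by simp
qed

lemma AV_mono:
  assumes "AV t n N" "N' \<le> N" shows "AV t n N'"
proof -
  obtain c where c: "edge_colouring N t c"
      "\<not> has_few_coloured_copy (star_V n) (star_E n) (t-2) N c" using assms unfolding AV_def by auto
  have "edge_colouring N' t c" using c(1) assms(2) unfolding edge_colouring_def by auto
  moreover have "\<not> has_few_coloured_copy (star_V n) (star_E n) (t-2) N' c"
    using c(2) assms(2) unfolding has_few_coloured_copy_def by fastforce
  ultimately show ?thesis unfolding AV_def by auto
qed

lemma AV_triv:
  assumes "N \<le> n" "0 < t" shows "AV t n N"
proof -
  have "edge_colouring N t (\<lambda>_. 0)" using assms unfolding edge_colouring_def by auto
  moreover have "\<not> has_few_coloured_copy (star_V n) (star_E n) (t-2) N (\<lambda>_. 0)"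
  proof
    assume "has_few_coloured_copy (star_V n) (star_E n) (t-2) N (\<lambda>_. 0)"
    then obtain f where "inj_on f {0..n}" "f ` {0..n} \<subseteq> {..<N}"
      unfolding has_few_coloured_copy_def star_V_def by auto
    hence "card {0..n} \<le> card {..<N}" using card_inj_on_le by blast
    thus False using assms by simp
  qed
  ultimately show ?thesis unfolding AV_def by auto
qed

lemma arith1:
  fixes k m mu :: nat
  assumes "2 \<le> k"
  shows "k*m + (m mod 2)*(k-2) \<le> 2*(mu + (k-1)*max mu (m-mu))"
proof (cases "m \<le> 2*mu")
  case True
  have "k*m + (m mod 2)*(k-2) \<le> k * (2*mu)"
  proof (cases "even m")
    case True thus ?thesis using \<open>m \<le> 2*mu\<close> by simp
  next
    case False
    hence "m + 1 \<le> 2*mu" using \<open>m \<le> 2*mu\<close> by presburger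
    hence "k*(m+1) \<le> k*(2*mu)" by (rule mult_le_mono2)
    moreover have "(m mod 2)*(k-2) \<le> k" using False by (simp add: odd_iff_mod_2_eq_one)
    ultimately show ?thesis by (simp add: algebra_simps)
  qed
  also have "\<dots> = 2*(mu + (k-1)*mu)" using assms by (cases k) (auto simp: algebra_simps)
  also have "\<dots> \<le> 2*(mu + (k-1)*max mu (m-mu))" by simp
  finally show ?thesis .
next
  case False
  define p where "p = m - 2*mu"
  have p: "m = 2*mu + p" "1 \<le> p" using False unfolding p_def by auto
  have mx: "max mu (m-mu) = mu + p" using p by simp
  have "(p mod 2)*(k-2) \<le> p*(k-2)" by (simp add: mult_le_mono1)
  hence "k*m + (m mod 2)*(k-2) \<le> k*(2*mu+p) + p*(k-2)" using p by (simp add: mod_add_left_eq)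
  also have "\<dots> = 2*(mu + (k-1)*(mu+p))" using assms
    by (cases k; cases "k - 1") (auto simp: algebra_simps)
  finally show ?thesis using mx by simp
qed

lemma pair_sum_bound:
  fixes d :: "nat \<Rightarrow> nat"
  assumes fin: "finite K" and k2: "2 \<le> card K"
    and pr: "\<And>a b. a \<in> K \<Longrightarrow> b \<in> K \<Longrightarrow> a \<noteq> b \<Longrightarrow> m \<le> d a + d b"
  shows "card K * m + (m mod 2) * (card K - 2) \<le> 2 * sum d K"
proof -
  have ne: "d ` K \<noteq> {}" using k2 by auto
  have "Min (d ` K) \<in> d ` K" using fin ne by (intro Min_in) auto
  then obtain a0 where a0: "a0 \<in> K" "d a0 = Min (d ` K)" by auto
  have mn: "d a0 \<le> d b" if "b \<in> K" for b
    using a0(2) fin that by simp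
  let ?M = "max (d a0) (m - d a0)"
  have lb: "?M \<le> d b" if "b \<in> K - {a0}" for b
  proof -
    have "m \<le> d a0 + d b" using pr[of a0 b] a0(1) that by auto
    thus ?thesis using mn[of b] that by auto
  qed
  have "card (K - {a0}) * ?M \<le> sum d (K - {a0})"
    using sum_bounded_below[of "K - {a0}" ?M d] lb by simp
  moreover have "card (K - {a0}) = card K - 1" using a0(1) fin by simp
  moreover have "sum d K = d a0 + sum d (K - {a0})" using a0(1) fin by (simp add: sum.remove)
  ultimately have "2 * (d a0 + (card K - 1) * ?M) \<le> 2 * sum d K" by simp
  moreover have "card K * m + (m mod 2) * (card K - 2) \<le> 2 * (d a0 + (card K - 1) * ?M)"
    by (rule arith1[OF k2])
  ultimately show ?thesis by linarith
qed

lemma handshake: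
  fixes c :: "nat set \<Rightarrow> nat"
  shows "even (\<Sum>v<N. deg c N v k)"
proof -
  let ?S = "SIGMA v:{..<N}. {w. w < N \<and> w \<noteq> v \<and> c {v,w} = k}"
  have "card ?S = (\<Sum>v<N. card {w. w < N \<and> w \<noteq> v \<and> c {v,w} = k})"
    by (rule card_SigmaI) auto
  hence e1: "(\<Sum>v<N. deg c N v k) = card ?S" unfolding deg_def by simp
  let ?S1 = "{p \<in> ?S. fst p < snd p}"
  let ?S2 = "{p \<in> ?S. snd p < fst p}"
  have fS: "finite ?S" by (rule finite_subset[of _ "{..<N} \<times> {..<N}"]) auto
  have sp: "?S = ?S1 \<union> ?S2" by auto
  have cu: "card (?S1 \<union> ?S2) = card ?S1 + card ?S2"
    by (rule card_Un_disjoint) (use fS in auto)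
  have "card ?S = card (?S1 \<union> ?S2)" using sp by (rule arg_cong[where f=card])
  hence "card ?S = card ?S1 + card ?S2" using cu by linarith
  moreover have "?S2 = prod.swap ` ?S1"
  proof
    show "?S2 \<subseteq> prod.swap ` ?S1"
    proof
      fix p assume p: "p \<in> ?S2"
      obtain a b where ab: "p = (a,b)" by fastforce
      have "{b,a} = {a,b}" by auto
      hence "(b,a) \<in> ?S1" using p ab by auto
      hence "prod.swap (b,a) \<in> prod.swap ` ?S1" by (rule imageI)
      thus "p \<in> prod.swap ` ?S1" using ab by simp
    qed
  next
    show "prod.swap ` ?S1 \<subseteq> ?S2"
    proof
      fix p assume "p \<in> prod.swap ` ?S1"
      then obtain a b where ab: "(a,b) \<in> ?S1" "p = (b,a)" by auto
      have "{b,a} = {a,b}" by auto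
      thus "p \<in> ?S2" using ab by auto
    qed
  qed
  hence "card ?S2 = card ?S1" by (simp add: card_image)
  ultimately have "card ?S = 2 * card ?S1" by linarith
  thus ?thesis using e1 by simp
qed

lemma cnt_fail:
  assumes t2: "2 \<le> t" and nN: "n < N"
    and lt: "2 * (N - 1) < t * (N - n) + ((N - n) mod 2) * (t - 2)"
  shows "\<not> AV t n N"
proof
  assume "AV t n N"
  then obtain c where ec: "edge_colouring N t c"
    and nc: "\<not> has_few_coloured_copy (star_V n) (star_E n) (t-2) N c" unfolding AV_def by auto
  have v: "0 < N" using nN by simp
  have "card {..<t} * (N - n) + ((N - n) mod 2) * (card {..<t} - 2) \<le> 2 * (\<Sum>k<t. deg c N 0 k)"
  proof (rule pair_sum_bound)
    fix a b assume "a \<in> {..<t}" "b \<in> {..<t}" "a \<noteq> b"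
    hence "N \<le> deg c N 0 a + deg c N 0 b + n" using avoid_of_nocopy[OF ec nc v] by auto
    thus "N - n \<le> deg c N 0 a + deg c N 0 b" by simp
  qed (use t2 in auto)
  thus False using deg_sum[OF ec v] lt by simp
qed

lemma par_fail:
  assumes t3: "3 \<le> t" and nN: "n < N" and oN: "odd N" and em: "even (N - n)"
    and eq: "2 * (N - 1) = t * (N - n)" and om: "odd ((N - n) div 2)"
  shows "\<not> AV t n N"
proof
  assume "AV t n N"
  then obtain c where ec: "edge_colouring N t c"
    and nc: "\<not> has_few_coloured_copy (star_V n) (star_E n) (t-2) N c" unfolding AV_def by auto
  define m where "m = N - n"
  have pr: "m \<le> deg c N v a + deg c N v b" if "v < N" "a < t" "b < t" "a \<noteq> b" for v a b
    using avoid_of_nocopy[OF ec nc that] unfolding m_def by simp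
  have up: "2 * deg c N v k \<le> m" if v: "v < N" and k: "k < t" for v k
  proof -
    have "card ({..<t} - {k}) * m + (m mod 2) * (card ({..<t} - {k}) - 2)
          \<le> 2 * sum (deg c N v) ({..<t} - {k})"
      by (rule pair_sum_bound) (use t3 k pr[OF v] in auto)
    hence "(t - 1) * m \<le> 2 * sum (deg c N v) ({..<t} - {k})" using k by simp
    moreover have "sum (deg c N v) {..<t} = deg c N v k + sum (deg c N v) ({..<t} - {k})"
      using k by (simp add: sum.remove)
    moreover have "sum (deg c N v) {..<t} = N - 1" using deg_sum[OF ec v] by simp
    moreover have "t * m = (t - 1) * m + m" using t3 by (cases t) auto
    ultimately show ?thesis using eq unfolding m_def by linarith
  qed
  have ex: "2 * deg c N v 0 = m" if v: "v < N" for v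
  proof (rule ccontr)
    assume ne: "2 * deg c N v 0 \<noteq> m"
    hence lt0: "2 * deg c N v 0 < m" using up[OF v, of 0] t3 by simp
    have "sum (deg c N v) {..<t} = deg c N v 0 + sum (deg c N v) ({..<t} - {0})"
      using t3 by (simp add: sum.remove)
    moreover have "2 * sum (deg c N v) ({..<t} - {0}) \<le> (t - 1) * m"
    proof -
      have "sum (\<lambda>k. 2 * deg c N v k) ({..<t} - {0}) \<le> sum (\<lambda>k. m) ({..<t} - {0})"
        by (rule sum_mono) (use up[OF v] in auto)
      thus ?thesis using t3 by (simp add: sum_distrib_left)
    qed
    moreover have "sum (deg c N v) {..<t} = N - 1" using deg_sum[OF ec v] by simp
    moreover have "t * m = (t - 1) * m + m" using t3 by (cases t) auto
    ultimately show False using eq lt0 unfolding m_def by linarith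
  qed
  have "(\<Sum>v<N. deg c N v 0) = (\<Sum>v<N. m div 2)"
    by (rule sum.cong) (use ex in force)+
  hence "(\<Sum>v<N. deg c N v 0) = N * (m div 2)" by simp
  moreover have "even (\<Sum>v<N. deg c N v 0)" by (rule handshake)
  ultimately show False using oN om unfolding m_def by simp
qed

definition cnt :: "nat \<Rightarrow> nat \<Rightarrow> nat \<Rightarrow> nat" where
  "cnt t M k = card {i. i < M \<and> i mod t = k}"

definition bnd :: "nat \<Rightarrow> nat \<Rightarrow> nat" where
  "bnd t M = 2 * (M div t) + (if M mod t = t - 1 then 1 else 0)"

lemma cnt_lb:
  assumes t: "0 < t" and k: "k < t"
  shows "M div t + (if k < M mod t then 1 else 0) \<le> cnt t M k"
proof -
  let ?J = "{..<M div t + (if k < M mod t then 1 else 0)}"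
  let ?I = "{i. i < M \<and> i mod t = k}"
  have inj: "inj_on (\<lambda>j. j * t + k) ?J" by (rule inj_onI) (use t in simp)
  have sub: "(\<lambda>j. j * t + k) ` ?J \<subseteq> ?I"
  proof
    fix y assume "y \<in> (\<lambda>j. j * t + k) ` ?J"
    then obtain j where j: "j \<in> ?J" "y = j * t + k" by blast
    have "j * t + k < M"
    proof (cases "j < M div t")
      case True
      hence "j * t + t \<le> (M div t) * t"
        by (metis Suc_leI add.commute mult_Suc mult_le_mono1)
      moreover have "(M div t) * t \<le> M" by simp
      ultimately show ?thesis using k by linarith
    next
      case False
      hence "j = M div t" "k < M mod t" using j(1) by (auto split: if_splits)
      hence "j * t + k < j * t + M mod t" by (intro add_strict_left_mono) simp
      moreover have "j * t + M mod t = M" using \<open>j = M div t\<close> by simp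
      ultimately show ?thesis by linarith
    qed
    moreover have "(j * t + k) mod t = k" using k by simp
    ultimately show "y \<in> ?I" using j(2) by simp
  qed
  have "card ?J \<le> card ?I" by (rule card_inj_on_le[OF inj sub]) simp
  thus ?thesis unfolding cnt_def by simp
qed

lemma cnt_pair:
  assumes t: "0 < t" and k: "k1 < t" "k2 < t" "k1 \<noteq> k2"
  shows "bnd t M \<le> cnt t M k1 + cnt t M k2"
proof -
  have a: "M div t + (if k1 < M mod t then 1 else 0) \<le> cnt t M k1" by (rule cnt_lb[OF t k(1)])
  have b: "M div t + (if k2 < M mod t then 1 else 0) \<le> cnt t M k2" by (rule cnt_lb[OF t k(2)])
  show ?thesis
  proof (cases "M mod t = t - 1")
    case True
    hence "k1 < M mod t \<or> k2 < M mod t" using k by auto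
    thus ?thesis using a b True unfolding bnd_def by (auto split: if_splits)
  next
    case False thus ?thesis using a b unfolding bnd_def by (auto split: if_splits)
  qed
qed

lemma bnd_ge: assumes "0 < t" "t * Q \<le> M" shows "2 * Q \<le> bnd t M"
proof -
  have "(t * Q) div t \<le> M div t" using assms(2) by (rule div_le_mono)
  hence "Q \<le> M div t" using assms(1) by simp
  thus ?thesis unfolding bnd_def by simp
qed

lemma bnd_top: assumes "0 < t" shows "2 * Q + 1 \<le> bnd t (t * Q + (t - 1))"
proof -
  have e: "t * Q + (t - 1) = (t - 1) + Q * t" by simp
  have "((t - 1) + Q * t) div t = Q + (t - 1) div t" using assms by (intro div_mult_self1) simp
  hence "(t * Q + (t - 1)) div t = Q" using assms e by simp
  moreover have "((t - 1) + Q * t) mod t = (t - 1) mod t" by (rule mod_mult_self1)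
  hence "(t * Q + (t - 1)) mod t = t - 1" using assms e by simp
  ultimately show ?thesis unfolding bnd_def by simp
qed

definition colA :: "nat \<Rightarrow> nat \<Rightarrow> nat set \<Rightarrow> nat" where
  "colA t M S = (if Max S < M then ((Min S + Max S) mod M) mod t
                 else if Max S = M then ((2 * Min S) mod M) mod t else Min S mod t)"

lemma colA_pair: "colA t M {u,w} = (if max u w < M then ((min u w + max u w) mod M) mod t
                 else if max u w = M then ((2 * min u w) mod M) mod t else min u w mod t)"
  unfolding colA_def by simp

lemma colA_lt: "0 < t \<Longrightarrow> colA t M S < t"
  unfolding colA_def by auto

lemma degA:
  assumes oM: "odd M" and t: "0 < t" and k: "k < t" and N: "N = M + 1 \<or> N = M + 2" and v: "v < N"
  shows "cnt t M k \<le> deg (colA t M) N v k"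
proof -
  let ?I = "{i. i < M \<and> i mod t = k}"
  let ?T = "{w. w < N \<and> w \<noteq> v \<and> colA t M {v,w} = k}"
  have fT: "finite ?T" by simp
  have M0: "0 < M" using oM by (cases M) auto
  have "card ?I \<le> card ?T"
  proof (cases "v < M")
    case True
    define \<phi> where "\<phi> i = (if i = (2 * v) mod M then M else (i + M - v) mod M)" for i
    have key: "(v + \<phi> i) mod M = i \<and> \<phi> i < M" if "i < M" "i \<noteq> (2 * v) mod M" for i
    proof -
      have "(v + (i + M - v) mod M) mod M = (v + (i + M - v)) mod M" by (simp add: mod_add_right_eq)
      also have "v + (i + M - v) = i + M" using True by simp
      also have "(i + M) mod M = i" using that by simp
      finally show ?thesis using that M0 unfolding \<phi>_def by simp
    qed
    have inj: "inj_on \<phi> ?I"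
    proof (rule inj_onI)
      fix i j assume ij: "i \<in> ?I" "j \<in> ?I" "\<phi> i = \<phi> j"
      show "i = j"
      proof (cases "i = (2 * v) mod M")
        case True
        hence "\<phi> j = M" using ij(3) unfolding \<phi>_def by simp
        hence "j = (2 * v) mod M" using key[of j] ij(2) by (cases "j = (2 * v) mod M") auto
        thus ?thesis using True by simp
      next
        case False
        hence "\<phi> i < M" using key[of i] ij(1) by simp
        hence jne: "j \<noteq> (2 * v) mod M" using ij(3) unfolding \<phi>_def by auto
        have "i = (v + \<phi> i) mod M" using key[of i] ij(1) False by simp
        also have "\<dots> = (v + \<phi> j) mod M" using ij(3) by simp
        also have "\<dots> = j" using key[of j] ij(2) jne by simp
        finally show ?thesis .
      qed
    qed
    have sub: "\<phi> ` ?I \<subseteq> ?T"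
    proof
      fix y assume "y \<in> \<phi> ` ?I"
      then obtain i where i: "i \<in> ?I" "y = \<phi> i" by blast
      show "y \<in> ?T"
      proof (cases "i = (2 * v) mod M")
        case True
        hence y: "y = M" using i unfolding \<phi>_def by simp
        have "colA t M {v, M} = ((2 * v) mod M) mod t" using True \<open>v < M\<close> by (simp add: colA_pair)
        thus ?thesis using y True i N \<open>v < M\<close> by auto
      next
        case False
        have ky: "(v + y) mod M = i" "y < M" using key[of i] i False by auto
        have yv: "y \<noteq> v"
        proof
          assume "y = v"
          hence "(2 * v) mod M = i" using ky(1) by (simp add: mult_2)
          thus False using False by simp
        qed
        have "colA t M {v, y} = ((v + y) mod M) mod t" using ky(2) True
          by (simp add: colA_pair min_def max_def add.commute)
        thus ?thesis using ky yv i N by auto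
      qed
    qed
    show ?thesis by (rule card_inj_on_le[OF inj sub fT])
  next
    case False
    show ?thesis
    proof (cases "v = M")
      case True
      define h where "h = M div 2 + 1"
      have "2 * (M div 2) + 1 = M" using oM by (rule odd_two_times_div_two_succ)
      hence h2: "2 * h = M + 1" unfolding h_def by simp
      define \<phi> where "\<phi> i = (i * h) mod M" for i
      have key: "(2 * \<phi> i) mod M = i" if "i < M" for i
      proof -
        have "(2 * \<phi> i) mod M = (2 * (i * h)) mod M" unfolding \<phi>_def by (simp add: mod_mult_right_eq)
        also have "2 * (i * h) = i * (2 * h)" by (simp only: mult.left_commute)
        also have "\<dots> = i * (M + 1)" by (simp only: h2)
        also have "\<dots> = i + i * M" by simp
        also have "(i + i * M) mod M = i" using that by simp
        finally show ?thesis .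
      qed
      have inj: "inj_on \<phi> ?I"
      proof (rule inj_onI)
        fix i j assume ij: "i \<in> ?I" "j \<in> ?I" "\<phi> i = \<phi> j"
        have "i = (2 * \<phi> i) mod M" using key[of i] ij(1) by simp
        also have "\<dots> = (2 * \<phi> j) mod M" using ij(3) by simp
        also have "\<dots> = j" using key[of j] ij(2) by simp
        finally show "i = j" .
      qed
      have sub: "\<phi> ` ?I \<subseteq> ?T"
      proof
        fix y assume "y \<in> \<phi> ` ?I"
        then obtain i where i: "i \<in> ?I" "y = \<phi> i" by blast
        have yM: "y < M" using i M0 unfolding \<phi>_def by simp
        have "colA t M {v, y} = ((2 * y) mod M) mod t" using yM True by (simp add: colA_pair)
        also have "(2 * y) mod M = i" using key[of i] i by simp
        finally show "y \<in> ?T" using i yM True N by auto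
      qed
      show ?thesis by (rule card_inj_on_le[OF inj sub fT])
    next
      case False2: False
      hence vM: "v = M + 1" "N = M + 2" using \<open>\<not> v < M\<close> v N by auto
      have sub: "id ` ?I \<subseteq> ?T"
      proof
        fix y assume "y \<in> id ` ?I"
        hence y: "y < M" "y mod t = k" by auto
        have "colA t M {v, y} = y mod t" using y vM by (simp add: colA_pair)
        thus "y \<in> ?T" using y vM by auto
      qed
      show ?thesis by (rule card_inj_on_le[OF _ sub fT]) simp
    qed
  qed
  thus ?thesis unfolding cnt_def deg_def .
qed

lemma AV_EA:
  assumes oM: "odd M" and t: "2 \<le> t" and N: "N = M + 1 \<or> N = M + 2" and le: "N \<le> bnd t M + n"
  shows "AV t n N"
proof -
  have t0: "0 < t" using t by simp
  have ec: "edge_colouring N t (colA t M)" unfolding edge_colouring_def using colA_lt[OF t0] by auto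
  have "\<not> has_few_coloured_copy (star_V n) (star_E n) (t-2) N (colA t M)"
  proof (rule no_copy[OF ec t])
    fix v k1 k2 assume a: "v < N" "k1 < t" "k2 < t" "k1 \<noteq> k2"
    have "bnd t M \<le> cnt t M k1 + cnt t M k2" by (rule cnt_pair[OF t0 a(2-4)])
    moreover have "cnt t M k1 \<le> deg (colA t M) N v k1" by (rule degA[OF oM t0 a(2) N a(1)])
    moreover have "cnt t M k2 \<le> deg (colA t M) N v k2" by (rule degA[OF oM t0 a(3) N a(1)])
    ultimately show "N \<le> deg (colA t M) N v k1 + deg (colA t M) N v k2 + n" using le by linarith
  qed
  thus ?thesis using ec unfolding AV_def by auto
qed

definition dd :: "nat \<Rightarrow> nat \<Rightarrow> nat \<Rightarrow> nat" where
  "dd N v w = min (max v w - min v w) (N - (max v w - min v w))"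

definition colC :: "nat \<Rightarrow> nat \<Rightarrow> nat set \<Rightarrow> nat" where
  "colC t N S = (min (Max S - Min S) (N - (Max S - Min S)) - 1) mod t"

lemma colC_pair: "colC t N {u,w} = (dd N u w - 1) mod t"
  unfolding colC_def dd_def by simp

lemma modv1: fixes v N d :: nat assumes "v < N" "d < N" shows "(v + d) mod N = (if v + d < N then v + d else v + d - N)"
proof (cases "v + d < N")
  case True thus ?thesis by simp
next
  case False
  hence "(v + d) mod N = (v + d - N) mod N" by (simp add: le_mod_geq)
  also have "\<dots> = v + d - N" using assms by simp
  finally show ?thesis using False by simp
qed

lemma modv2: fixes v N d :: nat assumes "v < N" "0 < d" "d < N"
  shows "(v + (N - d)) mod N = (if d \<le> v then v - d else v + N - d)"
proof (cases "d \<le> v")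
  case True
  hence "(v + (N - d)) mod N = (v + (N - d) - N) mod N" by (simp add: le_mod_geq)
  also have "\<dots> = v - d" using assms True by simp
  finally show ?thesis using True by simp
next
  case False thus ?thesis using assms by simp
qed

lemma w1: fixes v N d :: nat assumes "v < N" "0 < d" "2 * d < N"
  shows "(v + d) mod N < N \<and> (v + d) mod N \<noteq> v \<and> dd N v ((v + d) mod N) = d"
  using modv1[of v N d] assms unfolding dd_def by (auto simp: min_def max_def)

lemma w2: fixes v N d :: nat assumes "v < N" "0 < d" "2 * d < N"
  shows "(v + (N - d)) mod N < N \<and> (v + (N - d)) mod N \<noteq> v \<and> dd N v ((v + (N - d)) mod N) = d"
  using modv2[of v N d] assms unfolding dd_def by (auto simp: min_def max_def)

lemma w12: fixes v N d :: nat assumes "v < N" "0 < d" "2 * d < N"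
  shows "(v + d) mod N \<noteq> (v + (N - d)) mod N"
  using modv1[of v N d] modv2[of v N d] assms by auto

lemma degC:
  assumes oN: "odd N" and t: "0 < t" and k: "k < t" and v: "v < N"
  shows "2 * cnt t (N div 2) k \<le> deg (colC t N) N v k"
proof -
  let ?I = "{i. i < N div 2 \<and> i mod t = k}"
  let ?T = "{w. w < N \<and> w \<noteq> v \<and> colC t N {v,w} = k}"
  define f1 where "f1 i = (v + (i + 1)) mod N" for i
  define f2 where "f2 i = (v + (N - (i + 1))) mod N" for i
  have NN: "2 * (N div 2) + 1 = N" using oN by (rule odd_two_times_div_two_succ)
  have dI: "0 < i + 1" "2 * (i + 1) < N" if "i \<in> ?I" for i using that NN by auto
  have P1: "f1 i < N \<and> f1 i \<noteq> v \<and> dd N v (f1 i) = i + 1" if "i \<in> ?I" for i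
    unfolding f1_def by (rule w1[OF v dI[OF that]])
  have P2: "f2 i < N \<and> f2 i \<noteq> v \<and> dd N v (f2 i) = i + 1" if "i \<in> ?I" for i
    unfolding f2_def by (rule w2[OF v dI[OF that]])
  have inj1: "inj_on f1 ?I"
  proof (rule inj_onI)
    fix i j assume ij: "i \<in> ?I" "j \<in> ?I" "f1 i = f1 j"
    have "i + 1 = dd N v (f1 i)" using P1[OF ij(1)] by simp
    also have "\<dots> = dd N v (f1 j)" using ij(3) by simp
    also have "\<dots> = j + 1" using P1[OF ij(2)] by simp
    finally show "i = j" by simp
  qed
  have inj2: "inj_on f2 ?I"
  proof (rule inj_onI)
    fix i j assume ij: "i \<in> ?I" "j \<in> ?I" "f2 i = f2 j"
    have "i + 1 = dd N v (f2 i)" using P2[OF ij(1)] by simp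
    also have "\<dots> = dd N v (f2 j)" using ij(3) by simp
    also have "\<dots> = j + 1" using P2[OF ij(2)] by simp
    finally show "i = j" by simp
  qed
  have disj: "f1 ` ?I \<inter> f2 ` ?I = {}"
  proof (rule ccontr)
    assume "f1 ` ?I \<inter> f2 ` ?I \<noteq> {}"
    then obtain i j where ij: "i \<in> ?I" "j \<in> ?I" "f1 i = f2 j" by blast
    have "i + 1 = dd N v (f1 i)" using P1[OF ij(1)] by simp
    also have "\<dots> = dd N v (f2 j)" using ij(3) by simp
    also have "\<dots> = j + 1" using P2[OF ij(2)] by simp
    finally have "i = j" by simp
    hence "f1 i = f2 i" using ij(3) by simp
    thus False using w12[OF v dI[OF ij(1)]] unfolding f1_def f2_def by simp
  qed
  have sub: "f1 ` ?I \<union> f2 ` ?I \<subseteq> ?T"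
  proof
    fix w assume "w \<in> f1 ` ?I \<union> f2 ` ?I"
    then obtain i where i: "i \<in> ?I" and w: "w = f1 i \<or> w = f2 i" by blast
    have "w < N \<and> w \<noteq> v \<and> dd N v w = i + 1" using w P1[OF i] P2[OF i] by auto
    moreover have "colC t N {v,w} = (dd N v w - 1) mod t" by (rule colC_pair)
    ultimately show "w \<in> ?T" using i by auto
  qed
  have "card (f1 ` ?I \<union> f2 ` ?I) = card (f1 ` ?I) + card (f2 ` ?I)"
    by (rule card_Un_disjoint) (use disj in auto)
  also have "\<dots> = 2 * card ?I" using card_image[OF inj1] card_image[OF inj2] by simp
  finally have "2 * card ?I \<le> card ?T" using card_mono[OF _ sub] by simp
  thus ?thesis unfolding cnt_def deg_def .
qed

lemma AV_C:
  assumes oN: "odd N" and t: "2 \<le> t" and le: "N \<le> 2 * bnd t (N div 2) + n"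
  shows "AV t n N"
proof -
  have t0: "0 < t" using t by simp
  have ec: "edge_colouring N t (colC t N)" unfolding edge_colouring_def colC_def using t0 by auto
  have "\<not> has_few_coloured_copy (star_V n) (star_E n) (t-2) N (colC t N)"
  proof (rule no_copy[OF ec t])
    fix v k1 k2 assume a: "v < N" "k1 < t" "k2 < t" "k1 \<noteq> k2"
    have "bnd t (N div 2) \<le> cnt t (N div 2) k1 + cnt t (N div 2) k2" by (rule cnt_pair[OF t0 a(2-4)])
    moreover have "2 * cnt t (N div 2) k1 \<le> deg (colC t N) N v k1" by (rule degC[OF oN t0 a(2) a(1)])
    moreover have "2 * cnt t (N div 2) k2 \<le> deg (colC t N) N v k2" by (rule degC[OF oN t0 a(3) a(1)])
    ultimately show "N \<le> deg (colC t N) N v k1 + deg (colC t N) N v k2 + n" using le by linarith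
  qed
  thus ?thesis using ec unfolding AV_def by auto
qed

lemma AV_basic:
  assumes t: "2 \<le> t" and X: "2 \<le> X" and le: "X \<le> 2 * Q + n"
    and tq: "if even X then t * Q \<le> X - 1 else t * Q \<le> X - 2"
  shows "AV t n X"
proof (cases "even X")
  case True
  have "2 * Q \<le> bnd t (X - 1)" using tq True t by (intro bnd_ge) auto
  moreover have "odd (X - 1)" using True X by simp
  ultimately show ?thesis using True X le t by (intro AV_EA[of "X - 1"]) auto
next
  case False
  have "2 * Q \<le> bnd t (X - 2)" using tq False t by (intro bnd_ge) auto
  moreover have "odd (X - 2)" using False X by simp
  moreover have "X = (X - 2) + 2" using X by simp
  ultimately show ?thesis using False X le t by (intro AV_EA[of "X - 2"]) auto
qed

lemma AV_C2:
  assumes t: "2 \<le> t" and oX: "odd X" and tp: "t * P \<le> X div 2" and le: "X \<le> 4 * P + n"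
  shows "AV t n X"
proof -
  have "2 * P \<le> bnd t (X div 2)" using tp t by (intro bnd_ge) auto
  thus ?thesis using le by (intro AV_C[OF oX t]) auto
qed

lemma exists_fail:
  assumes "4 \<le> t" "1 \<le> n" shows "\<exists>N. 0 < N \<and> \<not> AV t n N"
proof -
  have "2 * (2 * n - 1) < t * (2 * n - n) + ((2 * n - n) mod 2) * (t - 2)"
  proof -
    have "4 * n \<le> t * n" using assms by simp
    moreover have e: "2 * n - n = n" by simp
    ultimately show ?thesis using assms by (simp only: e)
  qed
  hence "\<not> AV t n (2 * n)" using assms by (intro cnt_fail) auto
  thus ?thesis using assms by (intro exI[of _ "2 * n"]) auto
qed

lemma R_least: "ramsey_st (t-2) t (star_V n) (star_E n) = (LEAST N. 0 < N \<and> \<not> AV t n N)"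
  unfolding ramsey_st_def AV_def by simp

lemma R_eq:
  assumes "0 < X" "\<not> AV t n X" "X = 1 \<or> AV t n (X - 1)"
  shows "ramsey_st (t-2) t (star_V n) (star_E n) = X"
  unfolding R_least
proof (rule Least_equality)
  show "0 < X \<and> \<not> AV t n X" using assms by simp
next
  fix y assume y: "0 < y \<and> \<not> AV t n y"
  show "X \<le> y"
  proof (rule ccontr)
    assume "\<not> X \<le> y"
    hence "y \<le> X - 1" "X \<noteq> 1" using y by auto
    hence "AV t n y" using assms(3) AV_mono by blast
    thus False using y by simp
  qed
qed

lemma R_ne_A:
  assumes "AV t n X" "\<exists>N. 0 < N \<and> \<not> AV t n N"
  shows "ramsey_st (t-2) t (star_V n) (star_E n) \<noteq> X"
proof
  assume e: "ramsey_st (t-2) t (star_V n) (star_E n) = X"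
  from assms(2) obtain N where "0 < N \<and> \<not> AV t n N" by blast
  hence "0 < (LEAST N. 0 < N \<and> \<not> AV t n N) \<and> \<not> AV t n (LEAST N. 0 < N \<and> \<not> AV t n N)"
    by (rule LeastI)
  thus False using e assms(1) unfolding R_least by simp
qed

lemma R_ne_lt:
  assumes "0 < N" "N < X" "\<not> AV t n N"
  shows "ramsey_st (t-2) t (star_V n) (star_E n) \<noteq> X"
proof -
  have "(LEAST N. 0 < N \<and> \<not> AV t n N) \<le> N" using assms by (intro Least_le) simp
  thus ?thesis using assms unfolding R_least by simp
qed

lemma even_core:
  assumes t4: "4 \<le> t" and et: "even t" and X: "X = t*Q + Rr + 2" and Rr: "Rr < t"
    and nX: "n \<le> X" and n1: "1 \<le> n"
    and E1: "t*(X-n) + 2 \<le> 2*X" and E2: "2*X + 2 \<le> t*(X-n) + t"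
  shows "(((Rr = t - 1 \<and> even Q) \<or> (Rr + 2 < t \<and> t \<le> 2*Rr + 4)) \<longrightarrow> (\<not> AV t n X \<and> AV t n (X-1)))
    \<and> (\<not>((Rr = t - 1 \<and> even Q) \<or> (Rr + 2 < t \<and> t \<le> 2*Rr + 4)) \<longrightarrow> AV t n X)"
proof -
  define M0 where "M0 = X - n"
  have t2: "2 \<le> t" using t4 by simp
  have lo: "2*Q \<le> M0"
  proof (rule ccontr)
    assume "\<not> 2*Q \<le> M0"
    hence "M0 + 1 \<le> 2*Q" by simp
    hence "t*(M0+1) \<le> t*(2*Q)" by (rule mult_le_mono2)
    moreover have "t*(M0+1) = t*M0 + t" "t*(2*Q) = 2*(t*Q)" by simp_all
    ultimately show False using E2 X unfolding M0_def by linarith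
  qed
  have hi: "M0 \<le> 2*Q + 2"
  proof (rule ccontr)
    assume "\<not> M0 \<le> 2*Q + 2"
    hence "2*Q + 3 \<le> M0" by simp
    hence "t*(2*Q+3) \<le> t*M0" by (rule mult_le_mono2)
    moreover have "t*(2*Q+3) = 2*(t*Q) + 3*t" by (simp add: algebra_simps)
    ultimately show False using E1 X Rr unfolding M0_def by linarith
  qed
  obtain F where F: "M0 = 2*Q + F" "F \<le> 2" using lo hi by (metis add.commute le_add_diff_inverse2 le_diff_conv2 add_le_cancel_right)
  have tM: "t*M0 = 2*(t*Q) + t*F" using F by (simp add: algebra_simps)
  have E1': "t*M0 + 2 \<le> 2*X" "2*X + 2 \<le> t*M0 + t" using E1 E2 unfolding M0_def by simp_all
  have "F = 0 \<or> F = 1 \<or> F = 2" using F by auto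
  moreover {
    assume F0: "F = 0"
    have c: "2*Rr + 6 \<le> t" using E1' tM X F0 by simp
    have "AV t n X"
    proof (rule AV_basic[OF t2, of _ Q])
      show "2 \<le> X" using X by simp
      show "X \<le> 2*Q + n" using F F0 nX unfolding M0_def by simp
      show "if even X then t * Q \<le> X - 1 else t * Q \<le> X - 2" using X by simp
    qed
    moreover have "\<not>((Rr = t - 1 \<and> even Q) \<or> (Rr + 2 < t \<and> t \<le> 2*Rr + 4))" using c by auto
    ultimately have ?thesis by simp_all
  } note C0 = this
  moreover {
    assume F1: "F = 1"
    have c: "t \<le> 2*Rr + 2" "Rr + 3 \<le> t" using E1' tM X F1 by simp_all
    have "\<not> AV t n X"
    proof (rule cnt_fail[OF t2])
      show "n < X" using F F1 nX unfolding M0_def by simp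
      have "X - n = 2*Q + 1" using F F1 unfolding M0_def by simp
      moreover have "t * (2*Q+1) = 2*(t*Q) + t" by (simp add: algebra_simps)
      ultimately show "2 * (X - 1) < t * (X - n) + ((X - n) mod 2) * (t - 2)"
        using X c by simp
    qed
    moreover have "AV t n (X - 1)"
    proof (rule AV_basic[OF t2, of _ Q])
      show "2 \<le> X - 1" using X c t4 by simp
      show "X - 1 \<le> 2*Q + n" using F F1 nX unfolding M0_def by simp
      have r1: "1 \<le> Rr" using c t4 by simp
      have "t * Q \<le> X - 1 - 2" using X r1 by simp
      moreover have "t * Q \<le> X - 1 - 1" using X by simp
      ultimately show "if even (X - 1) then t * Q \<le> X - 1 - 1 else t * Q \<le> X - 1 - 2" by simp
    qed
    moreover have "(Rr = t - 1 \<and> even Q) \<or> (Rr + 2 < t \<and> t \<le> 2*Rr + 4)" using c by auto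
    ultimately have ?thesis by simp_all
  }
  moreover {
    assume F2: "F = 2"
    have rr: "Rr = t - 1" using E1' tM X F2 Rr by simp
    have X2: "X = t*(Q+1) + 1" using X rr t4 by (simp add: algebra_simps)
    have oX: "odd X" using X2 et by simp
    have Xn: "X - n = 2*Q + 2" using F F2 unfolding M0_def by simp
    {
      assume eQ: "even Q"
      have "\<not> AV t n X"
      proof (rule par_fail)
        show "3 \<le> t" using t4 by simp
        show "n < X" using Xn by simp
        show "odd X" by (rule oX)
        show "even (X - n)" using Xn by simp
        show "2 * (X - 1) = t * (X - n)" using X2 Xn by (simp add: algebra_simps)
        show "odd ((X - n) div 2)" using Xn eQ by simp
      qed
      moreover have "AV t n (X - 1)"
      proof (rule AV_EA[of "t*Q + (t - 1)" t])
        show "odd (t*Q + (t - 1))" using et t4 by simp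
        show "2 \<le> t" by (rule t2)
        show "X - 1 = t * Q + (t - 1) + 1 \<or> X - 1 = t * Q + (t - 1) + 2" using X rr by simp
        have "2*Q + 1 \<le> bnd t (t*Q + (t - 1))" using t4 by (intro bnd_top) simp
        thus "X - 1 \<le> bnd t (t * Q + (t - 1)) + n" using Xn nX by simp
      qed
      ultimately have ?thesis using eQ rr by simp_all
    }
    moreover {
      assume oQ: "odd Q"
      have "AV t n X"
      proof (rule AV_C2[OF t2 oX, of "(Q+1) div 2"])
        have "even (t*(Q+1))" using et by simp
        then obtain a where a: "t*(Q+1) = 2*a" by (rule evenE)
        have "X div 2 = (t*(Q+1)) div 2" using X2 a by simp
        also have "\<dots> = t * ((Q+1) div 2)"
        proof -
          have d: "2 dvd (Q+1)" using oQ by simp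
          show ?thesis by (rule div_mult_swap[OF d, symmetric])
        qed
        finally show "t * ((Q + 1) div 2) \<le> X div 2" by simp
        have "even (Q+1)" using oQ by simp
        then obtain b where b: "Q + 1 = 2*b" by (rule evenE)
        have "4 * ((Q+1) div 2) = 2*Q + 2" unfolding b using b by simp
        thus "X \<le> 4 * ((Q + 1) div 2) + n" using Xn by simp
      qed
      hence ?thesis using oQ rr t4 by auto
    }
    ultimately have ?thesis by blast
  }
  ultimately show ?thesis by blast
qed

lemma odd_core:
  assumes t5: "5 \<le> t" and ot: "odd t" and X: "X = t*Q + Rr + 2" and Rr: "Rr < t"
    and nX: "n \<le> X" and n1: "1 \<le> n"
    and E1: "(t-1)*(X-n) + 2 \<le> 2*X" and E2: "2*X + 3 \<le> (t-1)*(X-n) + t"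
  shows "((Rr + 2 < t \<and> Q + Rr + 3 < t \<and> t \<le> 2*Q + 2*Rr + 5) \<longrightarrow> (\<not> AV t n X \<and> AV t n (X-1)))
    \<and> (\<not>(Rr + 2 < t \<and> Q + Rr + 3 < t \<and> t \<le> 2*Q + 2*Rr + 5) \<longrightarrow>
         (AV t n X \<or> (0 < X - 1 \<and> \<not> AV t n (X-1))))"
proof -
  define M0 where "M0 = X - n"
  define T where "T = t - 1"
  have tT: "t = T + 1" using t5 unfolding T_def by simp
  have t2: "2 \<le> t" using t5 by simp
  have tQ: "t*Q = T*Q + Q" using tT by simp
  have E1': "T*M0 + 2 \<le> 2*X" "2*X + 3 \<le> T*M0 + t" using E1 E2 unfolding M0_def T_def by simp_all
  have lo: "2*Q \<le> M0"
  proof (rule ccontr)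
    assume "\<not> 2*Q \<le> M0"
    hence "M0 + 1 \<le> 2*Q" by simp
    hence "T*(M0+1) \<le> T*(2*Q)" by (rule mult_le_mono2)
    moreover have "T*(M0+1) = T*M0 + T" "T*(2*Q) = 2*(T*Q)" by simp_all
    ultimately show False using E1' X tQ tT by linarith
  qed
  define e where "e = M0 - 2*Q"
  have M0e: "M0 = 2*Q + e" using lo unfolding e_def by simp
  have TM: "T*M0 = 2*(T*Q) + T*e" using M0e by (simp add: algebra_simps)
  have Xn: "X - n = 2*Q + e" using M0e unfolding M0_def .
  have A1: "T*e \<le> 2*Q + 2*Rr + 2" using E1' TM X tQ by linarith
  have A2: "2*Q + 2*Rr + 6 \<le> T*e + T" using E1' TM X tQ tT by linarith
  have "e = 0 \<or> e = 1 \<or> e = 2 \<or> 3 \<le> e" by auto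
  moreover {
    assume e0: "e = 0"
    have c: "\<not>(Rr + 2 < t \<and> Q + Rr + 3 < t \<and> t \<le> 2*Q + 2*Rr + 5)" using A2 e0 tT by simp
    have "AV t n X"
    proof (rule AV_basic[OF t2, of _ Q])
      show "2 \<le> X" using X by simp
      show "X \<le> 2*Q + n" using Xn e0 nX by simp
      show "if even X then t * Q \<le> X - 1 else t * Q \<le> X - 2" using X by simp
    qed
    hence ?thesis using c by blast
  }
  moreover {
    assume e1: "e = 1"
    have c: "Rr + 2 < t \<and> Q + Rr + 3 < t \<and> t \<le> 2*Q + 2*Rr + 5" using A1 A2 e1 tT by simp
    have "\<not> AV t n X"
    proof (rule cnt_fail[OF t2])
      show "n < X" using Xn e1 by simp
      have tt: "t * (2*Q+1) = 2*(t*Q) + t" by (simp add: algebra_simps)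
      have xn: "X - n = 2*Q + 1" using Xn e1 by simp
      have m: "(2*Q+1) mod 2 = 1" by simp
      show "2 * (X - 1) < t * (X - n) + ((X - n) mod 2) * (t - 2)"
        unfolding xn m using X c tt by linarith
    qed
    moreover have "AV t n (X - 1)"
    proof (cases "1 \<le> Rr")
      case True
      show ?thesis
      proof (rule AV_basic[OF t2, of _ Q])
        show "2 \<le> X - 1" using X True by simp
        show "X - 1 \<le> 2*Q + n" using Xn e1 nX by simp
        have "t * Q \<le> X - 1 - 2" using X True by simp
        moreover have "t * Q \<le> X - 1 - 1" using X by simp
        ultimately show "if even (X - 1) then t * Q \<le> X - 1 - 1 else t * Q \<le> X - 1 - 2" by simp
      qed
    next
      case False
      hence X1: "X - 1 = t*Q + 1" using X by simp
      show ?thesis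
      proof (cases "even (X - 1)")
        case True
        hence "even (t*Q + 1)" unfolding X1 .
        hence "odd (t*Q)" by simp
        hence "1 \<le> Q" by (cases Q) auto
        hence "t \<le> t*Q" by simp
        show ?thesis
        proof (rule AV_basic[OF t2, of _ Q])
          show "2 \<le> X - 1" using X1 \<open>t \<le> t*Q\<close> t5 by simp
          show "X - 1 \<le> 2*Q + n" using Xn e1 nX by simp
          show "if even (X - 1) then t * Q \<le> X - 1 - 1 else t * Q \<le> X - 1 - 2" using X1 True by simp
        qed
      next
        case oX: False
        hence "odd (t*Q + 1)" unfolding X1 .
        hence "even (t*Q)" by simp
        hence "even Q" using ot by simp
        then obtain b where b: "Q = 2*b" by (rule evenE)
        show ?thesis
        proof (rule AV_C2[OF t2 oX, of b])
          have "(X - 1) div 2 = t*b" using X1 b by simp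
          thus "t * b \<le> (X - 1) div 2" by simp
          show "X - 1 \<le> 4 * b + n" using Xn e1 nX b by simp
        qed
      qed
    qed
    ultimately have ?thesis using c by simp
  }
  moreover {
    assume e2: "e = 2"
    have c: "\<not>(Rr + 2 < t \<and> Q + Rr + 3 < t \<and> t \<le> 2*Q + 2*Rr + 5)" using A1 e2 tT by simp
    have "AV t n X \<or> (0 < X - 1 \<and> \<not> AV t n (X-1))"
    proof (cases "Rr = t - 1")
      case False
      have "\<not> AV t n (X - 1)"
      proof (rule cnt_fail[OF t2])
        show "n < X - 1" using Xn e2 by simp
        have xn: "X - 1 - n = 2*Q + 1" using Xn e2 by simp
        have tt: "t * (2*Q+1) = 2*(t*Q) + t" by (simp add: algebra_simps)
        have m: "(2*Q+1) mod 2 = 1" by simp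
        show "2 * (X - 1 - 1) < t * (X - 1 - n) + ((X - 1 - n) mod 2) * (t - 2)"
          unfolding xn m using X False Rr tt by linarith
      qed
      thus ?thesis using X by simp
    next
      case True
      hence X2: "X = t*(Q+1) + 1" using X t5 by (simp add: algebra_simps)
      show ?thesis
      proof (cases "even X")
        case eX: True
        have "AV t n X"
        proof (rule AV_basic[OF t2, of _ "Q+1"])
          show "2 \<le> X" using X by simp
          show "X \<le> 2*(Q+1) + n" using Xn e2 nX by simp
          show "if even X then t * (Q+1) \<le> X - 1 else t * (Q+1) \<le> X - 2" using X2 eX by simp
        qed
        thus ?thesis by simp
      next
        case oX: False
        hence "even (t*(Q+1))" using X2 by simp
        hence "even (Q+1)" using ot by simp
        then obtain b where b: "Q + 1 = 2*b" by (rule evenE)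
        have "AV t n X"
        proof (rule AV_C2[OF t2 oX, of b])
          have "t*(Q+1) = 2*(t*b)" unfolding b by simp
          hence "X = 2*(t*b) + 1" using X2 by simp
          hence "X div 2 = t*b" by simp
          thus "t * b \<le> X div 2" by simp
          show "X \<le> 4 * b + n" using Xn e2 nX b by simp
        qed
        thus ?thesis by simp
      qed
    qed
    hence ?thesis using c by blast
  }
  moreover {
    assume e3: "3 \<le> e"
    have "T*3 \<le> T*e" using e3 by (rule mult_le_mono2)
    hence "T*3 \<le> 2*Q + 2*Rr + 2" using A1 by (rule le_trans)
    hence "\<not> (Q + Rr + 3 < t)" unfolding tT by simp
    hence c: "\<not>(Rr + 2 < t \<and> Q + Rr + 3 < t \<and> t \<le> 2*Q + 2*Rr + 5)" by simp
    have "\<not> AV t n (X - 1)"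
    proof (rule cnt_fail[OF t2])
      show "n < X - 1" using Xn e3 by simp
      have "2*Q + 2 \<le> X - 1 - n" using Xn e3 by simp
      hence "t * (2*Q + 2) \<le> t * (X - 1 - n)" by (rule mult_le_mono2)
      moreover have "t * (2*Q+2) = 2*(t*Q) + 2*t" by (simp add: algebra_simps)
      moreover have "2 * (X - 1 - 1) = 2*(t*Q) + 2*Rr" using X by simp
      ultimately have "2 * (X - 1 - 1) < t * (X - 1 - n)" using Rr by linarith
      thus "2 * (X - 1 - 1) < t * (X - 1 - n) + ((X - 1 - n) mod 2) * (t - 2)" by simp
    qed
    moreover have "0 < X - 1" using X by simp
    ultimately have ?thesis using c by blast
  }
  ultimately show ?thesis by blast
qed

theorem theorem6:
  fixes t n :: nat and x q r :: int
  assumes "t \<ge> 4" and "n \<ge> 1"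
    and "x = \<lfloor>(real (n * (t div 2)) - 1) / (real (t div 2) - 1)\<rfloor>"
    and "q = (x - 2) div int t" and "r = (x - 2) mod int t"
  shows "int (ramsey_st (t - 2) t (star_V n) (star_E n)) = x \<longleftrightarrow>
    ((r = int t - 1 \<and> odd x \<and> odd (q + 1))
     \<or> (r < int t - 2 \<and> int t \<le> 2 * r + 4 \<and> even t)
     \<or> (r < int t - 2 \<and> q + r + 3 < int t \<and> int t \<le> 2 * q + 2 * r + 5 \<and> odd t))"
proof -
  note t4 = assms(1) and n1 = assms(2) and qd = assms(4) and rd = assms(5)
  define s where "s = t div 2"
  have s2: "2 \<le> s" using t4 unfolding s_def by simp
  define y where "y = (real (n * s) - 1) / (real s - 1)"
  have xy: "x = \<lfloor>y\<rfloor>" using assms(3) unfolding y_def s_def .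
  have sp: "0 < real s - 1" using s2 by simp
  have "real_of_int x \<le> y" using xy by simp
  hence r1: "real_of_int x * (real s - 1) \<le> real (n * s) - 1"
    unfolding y_def using sp by (simp add: pos_le_divide_eq)
  have "y < real_of_int x + 1" using xy floor_correct[of y] by simp
  hence r2: "real (n * s) - 1 < (real_of_int x + 1) * (real s - 1)"
    unfolding y_def using sp by (simp add: pos_divide_less_eq)
  have "real_of_int (x * (int s - 1)) \<le> real_of_int (int n * int s - 1)" using r1 by simp
  hence i1: "x * (int s - 1) \<le> int n * int s - 1" by (simp only: of_int_le_iff)
  have "real_of_int (int n * int s - 1) < real_of_int ((x + 1) * (int s - 1))" using r2 by simp
  hence i2: "int n * int s - 1 < (x + 1) * (int s - 1)" by (simp only: of_int_less_iff)
  define A where "A = x * int s"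
  define B where "B = int n * int s"
  have i1': "A - x \<le> B - 1" using i1 unfolding A_def B_def by (simp add: algebra_simps)
  have i2': "B \<le> A + int s - x - 1" using i2 unfolding A_def B_def by (simp add: algebra_simps)
  have xn: "int n \<le> x"
  proof (rule ccontr)
    assume "\<not> int n \<le> x"
    hence "x + 1 \<le> int n" by simp
    hence "(x + 1) * (int s - 1) \<le> int n * (int s - 1)" using s2 by (intro mult_right_mono) auto
    thus False using i2 n1 by (simp add: algebra_simps)
  qed
  have ex: "\<exists>N. 0 < N \<and> \<not> AV t n N" by (rule exists_fail[OF t4 n1])
  let ?R = "ramsey_st (t - 2) t (star_V n) (star_E n)"
  let ?RHS = "((r = int t - 1 \<and> odd x \<and> odd (q + 1))
     \<or> (r < int t - 2 \<and> int t \<le> 2 * r + 4 \<and> even t)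
     \<or> (r < int t - 2 \<and> q + r + 3 < int t \<and> int t \<le> 2 * q + 2 * r + 5 \<and> odd t))"
  have tp: "0 < int t" using t4 by simp
  show ?thesis
  proof (cases "x = 1")
    case True
    have q1: "q = -1" using True qd tp by (simp add: div_eq_minus1)
    have r1: "r = int t - 1" using True rd tp by (simp add: zmod_minus1)
    have nr: "\<not> ?RHS" using q1 r1 by simp
    have "AV t n 1" using n1 t4 by (intro AV_triv) auto
    hence "?R \<noteq> 1" using ex by (rule R_ne_A)
    hence "int ?R \<noteq> x" using True by simp
    thus ?thesis using nr by simp
  next
    case False
    hence x2: "2 \<le> x" using xn n1 by simp
    have q0: "0 \<le> q" using x2 tp unfolding qd by (simp add: pos_imp_zdiv_nonneg_iff)
    have r0: "0 \<le> r" "r < int t" using tp unfolding rd by simp_all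
    have xqr: "x - 2 = int t * q + r" unfolding qd rd by simp
    define Q where "Q = nat q"
    define Rr where "Rr = nat r"
    define X where "X = nat x"
    have QR: "int Q = q" "int Rr = r" "int X = x" using q0 r0 x2 unfolding Q_def Rr_def X_def by simp_all
    have "int X = int (t * Q + Rr + 2)" using QR xqr by simp
    hence X: "X = t * Q + Rr + 2" by (simp only: of_nat_eq_iff)
    have Rr: "Rr < t" using r0 QR by simp
    have nX: "n \<le> X" using xn QR by simp
    have X0: "0 < X" using X by simp
    have dX: "int (X - n) = x - int n" using nX QR by (simp add: of_nat_diff)
    show ?thesis
    proof (cases "even t")
      case True
      obtain k where k: "t = 2 * k" using True by (rule evenE)
      have "s = k" unfolding s_def k by simp
      hence ts: "int t = 2 * int s" using k by simp
      have "int (t * (X - n)) = int t * (x - int n)" by (simp only: of_nat_mult dX)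
      also have "\<dots> = 2 * A - 2 * B" unfolding ts A_def B_def by (simp add: algebra_simps)
      finally have mul: "int (t * (X - n)) = 2 * A - 2 * B" .
      have "int (t * (X - n) + 2) \<le> int (2 * X)" using mul i1' QR by simp
      hence E1: "t * (X - n) + 2 \<le> 2 * X" by (simp only: of_nat_le_iff)
      have "int (2 * X + 2) \<le> int (t * (X - n) + t)" using mul i2' QR ts by simp
      hence E2: "2 * X + 2 \<le> t * (X - n) + t" by (simp only: of_nat_le_iff)
      note core = even_core[OF t4 True X Rr nX n1 E1 E2]
      have bridge: "?RHS \<longleftrightarrow> ((Rr = t - 1 \<and> even Q) \<or> (Rr + 2 < t \<and> t \<le> 2*Rr + 4))"
      proof -
        have a: "(r = int t - 1 \<and> odd x \<and> odd (q + 1)) \<longleftrightarrow> (Rr = t - 1 \<and> even Q)"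
        proof (cases "r = int t - 1")
          case True
          have "x = int t * (q + 1) + 1" using xqr True by (simp add: algebra_simps)
          hence "odd x" using \<open>even t\<close> by simp
          moreover have "Rr = t - 1" using True QR by simp
          moreover have "odd (q + 1) \<longleftrightarrow> even Q" unfolding QR(1)[symmetric] by simp
          ultimately show ?thesis using True by simp
        next
          case False
          hence "Rr \<noteq> t - 1" using QR t4 by simp
          thus ?thesis using False by simp
        qed
        have b: "(r < int t - 2 \<and> int t \<le> 2 * r + 4 \<and> even t) \<longleftrightarrow> (Rr + 2 < t \<and> t \<le> 2*Rr + 4)"
          unfolding QR(2)[symmetric] using \<open>even t\<close> by auto
        show ?thesis using a b \<open>even t\<close> by simp
      qed
      show ?thesis
      proof (cases "(Rr = t - 1 \<and> even Q) \<or> (Rr + 2 < t \<and> t \<le> 2*Rr + 4)")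
        case True
        hence "\<not> AV t n X \<and> AV t n (X - 1)" using core by simp
        hence "?R = X" using X0 by (intro R_eq) auto
        thus ?thesis using True bridge QR by simp
      next
        case False
        hence "AV t n X" using core by simp
        hence "?R \<noteq> X" using ex by (rule R_ne_A)
        hence "int ?R \<noteq> x" using QR by simp
        thus ?thesis using False bridge by simp
      qed
    next
      case False
      have t5: "5 \<le> t"
      proof (rule ccontr)
        assume "\<not> 5 \<le> t" hence "t = 4" using t4 by simp
        thus False using False by simp
      qed
      obtain k where k: "t = 2 * k + 1" using False by (rule oddE)
      have "s = k" unfolding s_def k by simp
      hence ts: "int t = 2 * int s + 1" using k by simp
      have t1: "int (t - 1) = 2 * int s" using ts t5 by (simp add: of_nat_diff)
      have "int ((t - 1) * (X - n)) = int (t - 1) * (x - int n)" by (simp only: of_nat_mult dX)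
      also have "\<dots> = 2 * A - 2 * B" unfolding t1 A_def B_def by (simp add: algebra_simps)
      finally have mul: "int ((t - 1) * (X - n)) = 2 * A - 2 * B" .
      have "int ((t - 1) * (X - n) + 2) \<le> int (2 * X)" using mul i1' QR by simp
      hence E1: "(t - 1) * (X - n) + 2 \<le> 2 * X" by (simp only: of_nat_le_iff)
      have "int (2 * X + 3) \<le> int ((t - 1) * (X - n) + t)" using mul i2' QR ts by simp
      hence E2: "2 * X + 3 \<le> (t - 1) * (X - n) + t" by (simp only: of_nat_le_iff)
      note core = odd_core[OF t5 False X Rr nX n1 E1 E2]
      have bridge: "?RHS \<longleftrightarrow> (Rr + 2 < t \<and> Q + Rr + 3 < t \<and> t \<le> 2*Q + 2*Rr + 5)"
      proof -
        have a: "\<not> (r = int t - 1 \<and> odd x \<and> odd (q + 1))"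
        proof
          assume h: "r = int t - 1 \<and> odd x \<and> odd (q + 1)"
          hence "x = int t * (q + 1) + 1" using xqr by (simp add: algebra_simps)
          moreover have "odd (int t * (q + 1))" using h \<open>odd t\<close> by simp
          ultimately show False using h by simp
        qed
        have c: "(r < int t - 2 \<and> q + r + 3 < int t \<and> int t \<le> 2 * q + 2 * r + 5 \<and> odd t)
            \<longleftrightarrow> (Rr + 2 < t \<and> Q + Rr + 3 < t \<and> t \<le> 2*Q + 2*Rr + 5)"
          unfolding QR(1)[symmetric] QR(2)[symmetric] using \<open>odd t\<close> by auto
        show ?thesis using a c \<open>odd t\<close> by blast
      qed
      show ?thesis
      proof (cases "Rr + 2 < t \<and> Q + Rr + 3 < t \<and> t \<le> 2*Q + 2*Rr + 5")
        case True
        hence "\<not> AV t n X \<and> AV t n (X - 1)" using core by simp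
        hence "?R = X" using X0 by (intro R_eq) auto
        thus ?thesis using True bridge QR by simp
      next
        case False
        hence "AV t n X \<or> (0 < X - 1 \<and> \<not> AV t n (X - 1))" using core by simp
        hence "?R \<noteq> X"
        proof
          assume "AV t n X" thus "?R \<noteq> X" using ex by (rule R_ne_A)
        next
          assume h: "0 < X - 1 \<and> \<not> AV t n (X - 1)"
          show "?R \<noteq> X" by (rule R_ne_lt[of "X - 1"]) (use h in auto)
        qed
        hence "int ?R \<noteq> x" using QR by simp
        thus ?thesis using False bridge by simp
      qed
    qed
  qed
qed

end
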